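(* Let $Y_1,Y_2,\ldots$ be i.i.d. Bernoulli$(1/2)$ and let $(Z^k)_k$ be generated by the bit-drop scheme described in the context, independently of $(Y_i)$. For integers $l\ge1$, $j\ge 0$ let $L^a_l(j)$ be the length of a longest common subsequence of $Z^j$ and $Y_1\ldots Y_l$. There are constants $C,c>0$ such that for every $\delta\in(0,1)$ and every $k\ge1$, $$P\Big(L^a_k\big(\lfloor 2(1-\delta)k\rfloor\big)=k\Big)\leq Ce^{-c\delta^2k}.$$
   Context: Bit-drop scheme: let $V_1,V_2,\ldots$ be i.i.d. Bernoulli$(1/2)$ and let $T_3,T_4,\ldots$ be independent, independent of $(V_k)$, with $T_{k+1}$ uniform on $\{2,\ldots,k\}$. Set $Z^2:=V_1V_2$ and, given $Z^k=Z^k_1\ldots Z^k_k$, define $Z^{k+1}_j:=Z^k_j$ for $j<T_{k+1}$, $Z^{k+1}_{T_{k+1}}:=V_{k+1}$, $Z^{k+1}_j:=Z^k_{j-1}$ for $T_{k+1}<j\le k+1$. Convention: $Z^0$ empty, $Z^1:=V_1$. *)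

theory Defs
  imports "HOL-Probability.Probability" "HOL-Library.Sublist"
begin

text \<open>Bits are modelled as booleans; Bernoulli(1/2) is bernoulli_pmf (1/2).
  Indices are 1-based as in the paper: V i for i >= 1, T i for i >= 3.\<close>

text \<open>The bit-drop scheme as a deterministic function of the sequences V and T.
  Z^{k+1} is obtained from Z^k by inserting V(k+1) at position T(k+1) (1-based).\<close>
fun zseq :: "(nat \<Rightarrow> bool) \<Rightarrow> (nat \<Rightarrow> nat) \<Rightarrow> nat \<Rightarrow> bool list" where
  "zseq V T 0 = []"
| "zseq V T (Suc 0) = [V 1]"
| "zseq V T (Suc (Suc 0)) = [V 1, V 2]"
| "zseq V T (Suc (Suc (Suc k))) =
     (let z = zseq V T (Suc (Suc k)); t = T (k + 3)
      in take (t - 1) z @ [V (k + 3)] @ drop (t - 1) z)"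

definition lcs_len :: "'a list \<Rightarrow> 'a list \<Rightarrow> nat" where
  "lcs_len xs ys = Max {length zs | zs. subseq zs xs \<and> subseq zs ys}"

text \<open>Only the finitely many coordinates that Z^j and Y_1..Y_l depend on are sampled.\<close>
definition ZY_pmf :: "nat \<Rightarrow> nat \<Rightarrow> (bool list \<times> bool list) pmf" where
  "ZY_pmf j l =
     bind_pmf (Pi_pmf {1..j} False (\<lambda>_. bernoulli_pmf (1/2))) (\<lambda>V.
     bind_pmf (Pi_pmf {3..j} 0 (\<lambda>i. pmf_of_set {2..i - 1})) (\<lambda>T.
     bind_pmf (Pi_pmf {1..l} False (\<lambda>_. bernoulli_pmf (1/2))) (\<lambda>Y.
     return_pmf (zseq V T j, map Y [1..<l + 1]))))"

end

theory Submission
  imports Defs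
begin


fun g :: "nat \<Rightarrow> nat \<Rightarrow> real" where
  "g n 0 = 1"
| "g 0 (Suc m) = 0"
| "g (Suc n) (Suc m) = (g n m + g n (Suc m)) / 2"

lemma g_bound:
  fixes l :: real assumes l: "0 \<le> l"
  shows "g n m \<le> exp (- l * m) * ((1 + exp l) / 2) ^ n"
proof (induction n m rule: g.induct)
  case (1 n)
  have "1 \<le> (1 + exp l) / 2" using l by simp
  then show ?case using one_le_power by simp
next
  case (2 m)
  then show ?case by simp
next
  case (3 n m)
  let ?M = "((1 + exp l) / 2) ^ n"
  have e: "exp (- l * real m) = exp (- l * real (Suc m)) * exp l"
    by (simp add: exp_add[symmetric] algebra_simps)
  have "g (Suc n) (Suc m) \<le> (exp (- l * m) * ?M + exp (- l * Suc m) * ?M) / 2"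
    using 3 by simp
  also have "\<dots> = exp (- l * Suc m) * (((1 + exp l) / 2) ^ Suc n)"
    unfolding e power_Suc by (simp add: algebra_simps)
  finally show ?case .
qed

lemma final_bound:
  fixes d :: real and n m :: nat
  assumes d: "0 < d" "d < 1" and n: "real n \<le> 2 * (1 - d) * real m"
  shows "g n m \<le> exp (- (1/4) * d\<^sup>2 * real m)"
proof -
  define l where "l = d / 2"
  have l: "0 \<le> l" "l \<le> 1" using d l_def by auto
  have M1: "(1 + exp l) / 2 \<le> exp (l/2 + l\<^sup>2/2)"
  proof -
    have "(1 + exp l) / 2 \<le> 1 + (l/2 + l\<^sup>2/2)" using exp_bound[OF l] by simp
    also have "\<dots> \<le> exp (l/2 + l\<^sup>2/2)" by (rule exp_ge_add_one_self)
    finally show ?thesis .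
  qed
  have "((1 + exp l) / 2) ^ n \<le> exp (l/2 + l\<^sup>2/2) ^ n"
    by (rule power_mono[OF M1]) (simp add: add_nonneg_nonneg less_imp_le)
  also have "\<dots> = exp (real n * (l/2 + l\<^sup>2/2))" by (simp add: exp_of_nat_mult)
  also have "\<dots> \<le> exp (2 * (1 - d) * real m * (l/2 + l\<^sup>2/2))"
    using n l by (intro exp_mono mult_right_mono) auto
  finally have P: "((1 + exp l) / 2) ^ n \<le> exp (2 * (1 - d) * real m * (l/2 + l\<^sup>2/2))" .
  have "g n m \<le> exp (- l * m) * ((1 + exp l) / 2) ^ n" by (rule g_bound[OF l(1)])
  also have "\<dots> \<le> exp (- l * m) * exp (2 * (1 - d) * real m * (l/2 + l\<^sup>2/2))"
    using P by simp
  also have "\<dots> = exp (- l * m + 2 * (1 - d) * real m * (l/2 + l\<^sup>2/2))"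
    by (rule exp_add[symmetric])
  also have "\<dots> \<le> exp (- (1/4) * d\<^sup>2 * real m)"
  proof (rule exp_mono)
    have "2 * (1 - d) * real m * (l/2 + l\<^sup>2/2) \<le> (1 - d) * real m * l + real m * l\<^sup>2"
    proof -
      have "(1 - d) * real m * l\<^sup>2 \<le> real m * l\<^sup>2" 
        using d by (intro mult_right_mono) (auto simp: algebra_simps)
      then show ?thesis by (simp add: algebra_simps)
    qed
    moreover have "- l * m + ((1 - d) * real m * l + real m * l\<^sup>2) = - (1/4) * d\<^sup>2 * real m"
      unfolding l_def by (simp add: power2_eq_square algebra_simps)
    ultimately show "- l * m + 2 * (1 - d) * real m * (l/2 + l\<^sup>2/2) \<le> - (1/4) * d\<^sup>2 * real m"
      by linarith
  qed
  finally show ?thesis .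
qed


fun idx :: "(nat \<Rightarrow> nat) \<Rightarrow> nat \<Rightarrow> nat list" where
  "idx T 0 = []"
| "idx T (Suc 0) = [1]"
| "idx T (Suc (Suc 0)) = [1, 2]"
| "idx T (Suc (Suc (Suc k))) =
     (let z = idx T (Suc (Suc k)); t = T (k + 3)
      in take (t - 1) z @ [k + 3] @ drop (t - 1) z)"

lemma zseq_idx: "zseq V T j = map V (idx T j)"
  by (induction V T j rule: zseq.induct) (auto simp: Let_def take_map drop_map)

lemma idx_props: "set (idx T j) = {1..j} \<and> distinct (idx T j)"
proof (induction T j rule: idx.induct)
  case (4 T k)
  define z where "z = idx T (Suc (Suc k))"
  define t where "t = T (k+3) - 1"
  have z: "set z = {1..Suc (Suc k)}" "distinct z" using 4 z_def by auto
  have "set (take t z) \<union> set (drop t z) = set z"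
    by (metis append_take_drop_id set_append)
  moreover have "set (take t z) \<inter> set (drop t z) = {}"
    using set_take_disj_set_drop_if_distinct[OF z(2), of t t] by simp
  moreover have "k + 3 \<notin> set (take t z)" "k + 3 \<notin> set (drop t z)" using z
    by (auto dest: in_set_takeD in_set_dropD)
  ultimately have "set (take t z @ [k + 3] @ drop t z) = {1..Suc (Suc (Suc k))}
      \<and> distinct (take t z @ [k + 3] @ drop t z)"
    using z by (auto simp: distinct_take distinct_drop)
  then show ?case by (simp add: Let_def z_def t_def)
qed auto

lemma lcs_sub:
  assumes "length y = k" "lcs_len z y = k"
  shows "subseq y z"
proof -
  let ?S = "{length zs | zs. subseq zs z \<and> subseq zs y}"
  have fin: "finite ?S"
    by (rule finite_subset[of _ "{0..length y}"]) (auto dest: list_emb_length)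
  have ne: "?S \<noteq> {}" by (auto intro!: exI[of _ "[]"])
  have "Max ?S \<in> ?S" using Max_in[OF fin ne] .
  then obtain zs where "length zs = k" "subseq zs z" "subseq zs y"
    using assms unfolding lcs_len_def by auto
  then have "zs = y" using subseq_same_length[of zs y] assms(1) \<open>length zs = k\<close> \<open>subseq zs y\<close> by simp
  then show ?thesis using \<open>subseq zs z\<close> by simp
qed


lemma half1: "0 \<le> x \<Longrightarrow> inverse 2 * ennreal x = ennreal (x/2)"
  using divide_ennreal[of x 2] by (simp add: divide_ennreal_def mult.commute)
lemma half_ennreal: "0 \<le> x \<Longrightarrow> 0 \<le> y \<Longrightarrow> inverse 2 * ennreal x + inverse 2 * ennreal y = ennreal ((x+y)/2)"
  by (simp add: half1 add_divide_distrib ennreal_plus)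
lemma half_ennreal2: "0 \<le> x \<Longrightarrow> 0 \<le> y \<Longrightarrow> ennreal x * inverse 2 + ennreal y * inverse 2 = ennreal ((x+y)/2)"
  using half_ennreal[of x y] by (simp add: mult.commute)
lemma half_ennreal3: "0 \<le> x \<Longrightarrow> 0 \<le> y \<Longrightarrow> ennreal y * inverse 2 + ennreal x * inverse 2 = ennreal ((x+y)/2)"
  using half_ennreal2[of y x] by (simp add: add.commute)
lemma g_nonneg: "g n m \<ge> 0"
  by (induction n m rule: g.induct) auto

abbreviation B where "B A \<equiv> Pi_pmf A False (\<lambda>_. bernoulli_pmf (1/2))"

lemma key:
  "finite A \<Longrightarrow> distinct p \<Longrightarrow> set p \<subseteq> A \<Longrightarrow>
   emeasure (measure_pmf (B A)) {V. subseq ys (map V p)} = ennreal (g (length p) (length ys))"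
proof (induction p arbitrary: A ys)
  case Nil
  then show ?case
    by (cases ys) (auto simp: measure_pmf.emeasure_space_1[simplified])
next
  case (Cons a p)
  define A' where "A' = A - {a}"
  have AA: "A = insert a A'" "a \<notin> A'" "finite A'" using Cons.prems A'_def by auto
  have pA': "set p \<subseteq> A'" "distinct p" "a \<notin> set p" using Cons.prems A'_def by auto
  have mp: "map (f(a:=y)) p = map f p" for f y using pA'(3) by (induction p) auto
  have "emeasure (measure_pmf (B A)) {V. subseq ys (map V (a#p))}
     = (\<integral>\<^sup>+y. \<integral>\<^sup>+f. indicator {V. subseq ys (map V (a#p))} (f(a:=y)) \<partial>B A' \<partial>bernoulli_pmf (1/2))"
    unfolding AA(1) by (simp add: Pi_pmf_insert'[OF AA(3) AA(2)])
  also have "\<dots> = (\<integral>\<^sup>+y. \<integral>\<^sup>+f. indicator {V. subseq ys (y # map V p)} f \<partial>B A' \<partial>bernoulli_pmf (1/2))"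
    by (simp add: mp indicator_def)
  also have "\<dots> = (\<integral>\<^sup>+y. emeasure (measure_pmf (B A')) {V. subseq ys (y # map V p)} \<partial>bernoulli_pmf (1/2))"
    by simp
  also have "\<dots> = ennreal (g (length (a#p)) (length ys))"
  proof (cases ys)
    case Nil
    then show ?thesis by (simp add: measure_pmf.emeasure_space_1[simplified])
  next
    case (Cons b ys')
    have e: "emeasure (measure_pmf (B A')) {V. subseq ys (y # map V p)}
       = (if y = b then ennreal (g (length p) (length ys')) else ennreal (g (length p) (Suc (length ys'))))" for y
      using Cons.IH[OF AA(3) pA'(2) pA'(1), of ys'] Cons.IH[OF AA(3) pA'(2) pA'(1), of ys] \<open>ys = b # ys'\<close>
      by auto
    show ?thesis unfolding e using \<open>ys = b # ys'\<close> g_nonneg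
      apply (cases b)
      by (simp_all add: half_ennreal2 half_ennreal3)
  qed
  finally show ?case .
qed

lemma main_prob: "measure_pmf.prob (ZY_pmf j k) {(z, y). lcs_len z y = k} \<le> g j k"
proof -
  define S where "S = {(z :: bool list, y :: bool list). lcs_len z y = k}"
  have ZY: "ZY_pmf j k = bind_pmf (Pi_pmf {3..j} 0 (\<lambda>i. pmf_of_set {2..i - 1})) (\<lambda>T.
      bind_pmf (Pi_pmf {1..k} False (\<lambda>_. bernoulli_pmf (1/2))) (\<lambda>Y.
      bind_pmf (B {1..j}) (\<lambda>V. return_pmf (zseq V T j, map Y [1..<k + 1]))))"
    unfolding ZY_pmf_def
      bind_commute_pmf[of "B {1..j}" "Pi_pmf {3..j} 0 (\<lambda>i. pmf_of_set {2..i - 1})"]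
      bind_commute_pmf[of "B {1..j}" "Pi_pmf {1..k} False (\<lambda>_. bernoulli_pmf (1/2))"]
    by (rule refl)
  have inner: "emeasure (measure_pmf (bind_pmf (B {1..j}) (\<lambda>V. return_pmf (zseq V T j, map Y [1..<k + 1])))) S
      \<le> ennreal (g j k)" for T Y
  proof -
    let ?ys = "map Y [1..<k + 1]"
    have "emeasure (measure_pmf (bind_pmf (B {1..j}) (\<lambda>V. return_pmf (zseq V T j, ?ys)))) S
        = (\<integral>\<^sup>+V. indicator S (zseq V T j, ?ys) \<partial>B {1..j})" by simp
    also have "\<dots> \<le> (\<integral>\<^sup>+V. indicator {V. subseq ?ys (map V (idx T j))} V \<partial>B {1..j})"
      by (intro nn_integral_mono) (auto simp: S_def indicator_def zseq_idx dest: lcs_sub[rotated])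
    also have "\<dots> = emeasure (measure_pmf (B {1..j})) {V. subseq ?ys (map V (idx T j))}"
      by simp
    also have "\<dots> = ennreal (g (length (idx T j)) (length ?ys))"
      using idx_props[of T j] by (intro key) auto
    also have "length (idx T j) = j"
      using idx_props[of T j] distinct_card[of "idx T j"] by simp
    also have "length ?ys = k" by simp
    finally show ?thesis .
  qed
  have "emeasure (measure_pmf (ZY_pmf j k)) S \<le> (\<integral>\<^sup>+T. \<integral>\<^sup>+Y. ennreal (g j k)
        \<partial>Pi_pmf {1..k} False (\<lambda>_. bernoulli_pmf (1/2)) \<partial>Pi_pmf {3..j} 0 (\<lambda>i. pmf_of_set {2..i - 1}))"
    unfolding ZY emeasure_bind_pmf by (intro nn_integral_mono inner[unfolded emeasure_bind_pmf])
  also have "\<dots> = ennreal (g j k)"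
    by (simp add: nn_integral_const measure_pmf.emeasure_space_1)
  finally have "ennreal (measure_pmf.prob (ZY_pmf j k) S) \<le> ennreal (g j k)"
    by (simp add: measure_pmf.emeasure_eq_measure)
  then show ?thesis unfolding S_def using g_nonneg by (simp add: ennreal_le_iff)
qed

theorem lemma15:
  shows "\<exists>C c :: real. C > 0 \<and> c > 0 \<and>
    (\<forall>\<delta> :: real. \<forall>k :: nat. 0 < \<delta> \<and> \<delta> < 1 \<and> k \<ge> 1 \<longrightarrow>
      measure_pmf.prob (ZY_pmf (nat \<lfloor>2 * (1 - \<delta>) * real k\<rfloor>) k)
        {(z, y). lcs_len z y = k}
      \<le> C * exp (- c * \<delta>\<^sup>2 * real k))"
proof -
  have main: "measure_pmf.prob (ZY_pmf (nat \<lfloor>2 * (1 - d) * real k\<rfloor>) k)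
        {(z, y). lcs_len z y = k} \<le> 1 * exp (- (1/4) * d\<^sup>2 * real k)"
    if a: "0 < d" "d < 1" for d :: real and k :: nat
  proof -
    define j where "j = nat \<lfloor>2 * (1 - d) * real k\<rfloor>"
    have "real j \<le> 2 * (1 - d) * real k"
      unfolding j_def using a by (simp add: of_nat_nat)
    then have "g j k \<le> exp (- (1/4) * d\<^sup>2 * real k)"
      using a by (intro final_bound) auto
    then show ?thesis
      using main_prob[of j k] unfolding j_def by simp
  qed
  show ?thesis
    by (intro exI[of _ "1::real"] exI[of _ "1/4::real"] conjI allI impI; ((rule main)?; simp))
qed

end
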